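(* There exist a constant $c>0$ and a sequence $(\Phi_n(x))_{n\ge0}$ of existential Presburger formulas with one free variable, of size $O(n^2)$, such that for all sufficiently large $n$, every quantifier-free Presburger formula $\varphi_n$ equivalent to $\Phi_n$ satisfies $|\varphi_n|\ge 2^{cn}$ (sizes measured with constants in binary).
   Context: Presburger arithmetic is the first-order theory of $\langle\mathbb{Z};+,<,(\equiv_m)_m,0,1\rangle$ with atoms $\sum a_ix_i\le b$ and $\sum a_ix_i\equiv b\pmod m$. Quantifier-free formulas are Boolean combinations of atoms; existential formulas are $\exists\bm{u}\colon\chi$ with $\chi$ quantifier-free. The size $|\varphi|$ is the number of symbols to write $\varphi$ with constants in binary. Two formulas are equivalent if they define the same subset of $\mathbb{Z}$. *)

theory Defs
  imports Main "HOL-Library.Landau_Symbols"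
begin

text \<open>Syntax of Presburger arithmetic. Variables are natural-number indices;
  variable 0 plays the role of the free variable x. A linear form
  sum a_i x_i is a list of (coefficient, variable) pairs.\<close>

type_synonym lin = "(int \<times> nat) list"

datatype pform =
    Le lin int
  | Cong lin int int
  | Neg pform
  | Conj pform pform
  | Disj pform pform
  | Ex nat pform

definition lval :: "lin \<Rightarrow> (nat \<Rightarrow> int) \<Rightarrow> int" where
  "lval t \<sigma> = (\<Sum>p\<leftarrow>t. fst p * \<sigma> (snd p))"

fun sat :: "pform \<Rightarrow> (nat \<Rightarrow> int) \<Rightarrow> bool" where
  "sat (Le t b) \<sigma> = (lval t \<sigma> \<le> b)"
| "sat (Cong t b m) \<sigma> = (lval t \<sigma> mod m = b mod m)"
| "sat (Neg \<phi>) \<sigma> = (\<not> sat \<phi> \<sigma>)"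
| "sat (Conj \<phi> \<psi>) \<sigma> = (sat \<phi> \<sigma> \<and> sat \<psi> \<sigma>)"
| "sat (Disj \<phi> \<psi>) \<sigma> = (sat \<phi> \<sigma> \<or> sat \<psi> \<sigma>)"
| "sat (Ex v \<phi>) \<sigma> = (\<exists>z. sat \<phi> (\<sigma>(v := z)))"

fun fv :: "pform \<Rightarrow> nat set" where
  "fv (Le t b) = snd ` set t"
| "fv (Cong t b m) = snd ` set t"
| "fv (Neg \<phi>) = fv \<phi>"
| "fv (Conj \<phi> \<psi>) = fv \<phi> \<union> fv \<psi>"
| "fv (Disj \<phi> \<psi>) = fv \<phi> \<union> fv \<psi>"
| "fv (Ex v \<phi>) = fv \<phi> - {v}"

fun wf :: "pform \<Rightarrow> bool" where
  "wf (Le t b) = True"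
| "wf (Cong t b m) = (m > 0)"
| "wf (Neg \<phi>) = wf \<phi>"
| "wf (Conj \<phi> \<psi>) = (wf \<phi> \<and> wf \<psi>)"
| "wf (Disj \<phi> \<psi>) = (wf \<phi> \<and> wf \<psi>)"
| "wf (Ex v \<phi>) = wf \<phi>"

fun qfree :: "pform \<Rightarrow> bool" where
  "qfree (Le t b) = True"
| "qfree (Cong t b m) = True"
| "qfree (Neg \<phi>) = qfree \<phi>"
| "qfree (Conj \<phi> \<psi>) = (qfree \<phi> \<and> qfree \<psi>)"
| "qfree (Disj \<phi> \<psi>) = (qfree \<phi> \<and> qfree \<psi>)"
| "qfree (Ex v \<phi>) = False"

fun existential :: "pform \<Rightarrow> bool" where
  "existential (Ex v \<phi>) = existential \<phi>"
| "existential \<phi> = qfree \<phi>"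

fun binlen :: "nat \<Rightarrow> nat" where
  "binlen n = (if n \<le> 1 then 1 else 1 + binlen (n div 2))"

text \<open>Size of an integer constant written in binary, with a sign symbol.\<close>
definition isize :: "int \<Rightarrow> nat" where
  "isize a = 1 + binlen (nat \<bar>a\<bar>)"

definition lsize :: "lin \<Rightarrow> nat" where
  "lsize t = (\<Sum>p\<leftarrow>t. isize (fst p) + 2)"   \<comment> \<open>coefficient, variable, + symbol\<close>

fun psize :: "pform \<Rightarrow> nat" where
  "psize (Le t b) = lsize t + isize b + 1"
| "psize (Cong t b m) = lsize t + isize b + isize m + 1"
| "psize (Neg \<phi>) = 1 + psize \<phi>"
| "psize (Conj \<phi> \<psi>) = 1 + psize \<phi> + psize \<psi>"
| "psize (Disj \<phi> \<psi>) = 1 + psize \<phi> + psize \<psi>"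
| "psize (Ex v \<phi>) = 2 + psize \<phi>"

definition defset :: "pform \<Rightarrow> int set" where
  "defset \<phi> = {z. sat \<phi> ((\<lambda>_. 0)(0 := z))}"

end

theory Submission
  imports Defs
begin

definition Phi :: "nat \<Rightarrow> pform" where
  "Phi n = Ex 1 (Ex 2 (Conj (Conj (Le [(1,0),(-(2^(n+1)),1),(-1,2)] 0)
                                  (Le [(-1,0),(2^(n+1),1),(1,2)] 0))
                            (Conj (Le [(-1,2)] 0) (Le [(1,2)] (2^n - 1)))))"

lemma Phi_props: "existential (Phi n) \<and> wf (Phi n) \<and> fv (Phi n) \<subseteq> {0}"
  by (auto simp: Phi_def)

lemma sat_Phi: "sat (Phi n) \<sigma> \<longleftrightarrow> (\<exists>a b::int. \<sigma> 0 = 2^(n+1)*a + b \<and> 0 \<le> b \<and> b \<le> 2^n - 1)"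
proof -
  have "sat (Phi n) \<sigma> \<longleftrightarrow> (\<exists>a b::int. \<sigma> 0 - 2^(n+1)*a - b \<le> 0 \<and> - \<sigma> 0 + 2^(n+1)*a + b \<le> 0 \<and> -b \<le> 0 \<and> b \<le> 2^n - 1)"
    unfolding Phi_def by (simp only: sat.simps lval_def fun_upd_same fun_upd_other list.map fst_conv snd_conv sum_list.Cons sum_list.Nil) (simp add: algebra_simps)
  also have "\<dots> \<longleftrightarrow> (\<exists>a b::int. \<sigma> 0 = 2^(n+1)*a + b \<and> 0 \<le> b \<and> b \<le> 2^n - 1)"
    by (intro iff_exI) linarith
  finally show ?thesis .
qed
lemma defset_Phi: "defset (Phi n) = {z. z mod 2^(n+1) < 2^n}"
proof -
  have "(\<exists>a b::int. z = 2^(n+1)*a + b \<and> 0 \<le> b \<and> b \<le> 2^n - 1) \<longleftrightarrow> z mod 2^(n+1) < 2^n" for z :: int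
  proof
    assume "\<exists>a b::int. z = 2^(n+1)*a + b \<and> 0 \<le> b \<and> b \<le> 2^n - 1"
    then obtain a b :: int where z: "z = 2^(n+1)*a + b" and h: "0 \<le> b" "b \<le> 2^n - 1" by blast
    have "(2::int)^n < 2^(n+1)" by simp
    hence "z mod 2^(n+1) = b" using h unfolding z by simp
    thus "z mod 2^(n+1) < 2^n" using h(2) by simp
  next
    assume h: "z mod 2^(n+1) < 2^n"
    have "z = 2^(n+1) * (z div 2^(n+1)) + z mod 2^(n+1)" by simp
    moreover have "0 \<le> z mod 2^(n+1)" by simp
    ultimately show "\<exists>a b::int. z = 2^(n+1)*a + b \<and> 0 \<le> b \<and> b \<le> 2^n - 1"
      using h by (intro exI[of _ "z div 2^(n+1)"] exI[of _ "z mod 2^(n+1)"]) simp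
  qed
  thus ?thesis by (auto simp: defset_def sat_Phi)
qed

declare binlen.simps[simp del]

lemma binlen_le: "x < 2^j \<Longrightarrow> binlen x \<le> j + 1"
proof (induction j arbitrary: x)
  case 0 thus ?case by (simp add: binlen.simps)
next
  case (Suc j)
  have "x div 2 < 2^j" using Suc.prems by auto
  from Suc.IH[OF this] show ?case by (simp add: binlen.simps)
qed

lemma binlen01[simp]: "binlen 0 = 1" "binlen (Suc 0) = 1"
  by (simp_all add: binlen.simps)

lemma isize_pow: "isize (2^k) \<le> k + 3"
  using binlen_le[of "2^k" "Suc k"] by (simp add: isize_def nat_power_eq)

lemma isize_pow1: "isize (2^k - 1) \<le> k + 2"
proof -
  have "nat \<bar>2^k - 1 :: int\<bar> < 2^k" by (simp add: nat_less_iff)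
  from binlen_le[OF this] show ?thesis by (simp add: isize_def)
qed

lemma psize_Phi: "psize (Phi n) \<le> 60 + 4 * n"
proof -
  have a: "isize (-(2^(n+1))) \<le> n + 4" using isize_pow[of "n+1"] by (simp add: isize_def)
  have b: "isize (2^(n+1)) \<le> n + 4" using isize_pow[of "n+1"] by simp
  have c: "isize 1 = 2" "isize (-1) = 2" "isize 0 = 2" by (simp_all add: isize_def)
  show ?thesis using a b c isize_pow1[of n]
    by (simp add: Phi_def lsize_def)
qed

lemma Phi_bigo: "(\<lambda>n. real (psize (Phi n))) \<in> O(\<lambda>n. real n ^ 2)"
proof (rule bigoI[where c = 64])
  have "psize (Phi n) \<le> 64 * n^2" if "n \<ge> 1" for n :: nat
  proof -
    have "n \<le> n * n" using that by simp
    have "60 + 4 * n \<le> 64 * n" using that by linarith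
    also have "\<dots> \<le> 64 * (n * n)" using \<open>n \<le> n * n\<close> by simp
    finally have "60 + 4 * n \<le> 64 * (n * n)" .
    thus ?thesis using psize_Phi[of n] by (simp add: power2_eq_square)
  qed
  hence "real (psize (Phi n)) \<le> 64 * real n ^ 2" if "n \<ge> 1" for n :: nat
  proof -
    have "real (psize (Phi n)) \<le> real (64 * n^2)" using that \<open>\<And>n. n \<ge> 1 \<Longrightarrow> psize (Phi n) \<le> 64 * n^2\<close>
      by (simp only: of_nat_le_iff)
    thus ?thesis by simp
  qed
  thus "eventually (\<lambda>n. norm (real (psize (Phi n))) \<le> 64 * norm (real n ^ 2)) at_top"
    unfolding eventually_at_top_linorder by (intro exI[of _ 1]) simp
qed

fun congs :: "pform \<Rightarrow> (lin \<times> int \<times> int) list" where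
  "congs (Le t b) = []"
| "congs (Cong t b m) = [(t, b, m)]"
| "congs (Neg \<phi>) = congs \<phi>"
| "congs (Conj \<phi> \<psi>) = congs \<phi> @ congs \<psi>"
| "congs (Disj \<phi> \<psi>) = congs \<phi> @ congs \<psi>"
| "congs (Ex v \<phi>) = congs \<phi>"

fun bnd :: "pform \<Rightarrow> int" where
  "bnd (Le t b) = \<bar>b\<bar>"
| "bnd (Cong t b m) = 0"
| "bnd (Neg \<phi>) = bnd \<phi>"
| "bnd (Conj \<phi> \<psi>) = bnd \<phi> + bnd \<psi>"
| "bnd (Disj \<phi> \<psi>) = bnd \<phi> + bnd \<psi>"
| "bnd (Ex v \<phi>) = bnd \<phi>"

lemma bnd_nonneg: "bnd \<phi> \<ge> 0"
  by (induction \<phi>) auto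

definition csum :: "lin \<Rightarrow> int" where
  "csum t = (\<Sum>p\<leftarrow>t. fst p)"

lemma lval_single: "snd ` set t \<subseteq> {0} \<Longrightarrow> lval t \<sigma> = csum t * \<sigma> 0"
  by (induction t) (auto simp: lval_def csum_def algebra_simps)

lemma length_congs: "length (congs \<phi>) \<le> psize \<phi>"
  by (induction \<phi>) auto

lemma congs_pos: "wf \<phi> \<Longrightarrow> (t, b, m) \<in> set (congs \<phi>) \<Longrightarrow> m > 0"
  by (induction \<phi>) auto

lemma le_const:
  fixes a x y b :: int
  assumes "x > \<bar>b\<bar>" "y > \<bar>b\<bar>"
  shows "(a*x \<le> b) = (a*y \<le> b)"
proof (cases "a \<ge> 1")
  case True
  have "a*x \<ge> x" "a*y \<ge> y" using True assms
    by (smt (verit) mult_le_cancel_right1)+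
  thus ?thesis using assms by auto
next
  case False
  show ?thesis
  proof (cases "a = 0")
    case False
    hence "a \<le> -1" using \<open>\<not> a \<ge> 1\<close> by auto
    have "a*x \<le> -x" "a*y \<le> -y" using \<open>a \<le> -1\<close> assms
      by (smt (verit) mult_le_cancel_right1 mult_minus_left)+
    thus ?thesis using assms by auto
  qed simp
qed


lemma sat_same:
  assumes "qfree \<phi>" "fv \<phi> \<subseteq> {0}" "x > bnd \<phi>" "y > bnd \<phi>"
    "\<forall>(t,b,m) \<in> set (congs \<phi>). (csum t * x mod m = b mod m) = (csum t * y mod m = b mod m)"
  shows "sat \<phi> ((\<lambda>_. 0)(0 := x)) = sat \<phi> ((\<lambda>_. 0)(0 := y))"
  using assms
proof (induction \<phi>)
  case (Le t b)
  thus ?case using le_const[of b x y "csum t"] by (simp add: lval_single)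
next
  case (Cong t b m)
  thus ?case by (simp add: lval_single)
next
  case (Conj \<phi>1 \<phi>2)
  have b: "bnd \<phi>1 \<ge> 0" "bnd \<phi>2 \<ge> 0" by (simp_all add: bnd_nonneg)
  have "sat \<phi>1 ((\<lambda>_. 0)(0 := x)) = sat \<phi>1 ((\<lambda>_. 0)(0 := y))"
    apply (rule Conj.IH(1))
    using Conj.prems b by simp_all
  moreover have "sat \<phi>2 ((\<lambda>_. 0)(0 := x)) = sat \<phi>2 ((\<lambda>_. 0)(0 := y))"
    apply (rule Conj.IH(2))
    using Conj.prems b by simp_all
  ultimately show ?case by (simp only: sat.simps)
next
  case (Disj \<phi>1 \<phi>2)
  have b: "bnd \<phi>1 \<ge> 0" "bnd \<phi>2 \<ge> 0" by (simp_all add: bnd_nonneg)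
  have "sat \<phi>1 ((\<lambda>_. 0)(0 := x)) = sat \<phi>1 ((\<lambda>_. 0)(0 := y))"
    apply (rule Disj.IH(1))
    using Disj.prems b by simp_all
  moreover have "sat \<phi>2 ((\<lambda>_. 0)(0 := x)) = sat \<phi>2 ((\<lambda>_. 0)(0 := y))"
    apply (rule Disj.IH(2))
    using Disj.prems b by simp_all
  ultimately show ?case by (simp only: sat.simps)
next
  case (Neg \<phi>)
  have "sat \<phi> ((\<lambda>_. 0)(0 := x)) = sat \<phi> ((\<lambda>_. 0)(0 := y))"
    apply (rule Neg.IH)
    using Neg.prems by simp_all
  thus ?case by (simp only: sat.simps)
next
  case (Ex v \<phi>)
  thus ?case by simp
qed

lemma two_split: "(z::int) \<noteq> 0 \<Longrightarrow> \<exists>s r. z = 2^s * r \<and> odd r"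
proof (induction "nat \<bar>z\<bar>" arbitrary: z rule: less_induct)
  case less
  show ?case
  proof (cases "odd z")
    case True thus ?thesis by (intro exI[of _ 0] exI[of _ z]) simp
  next
    case False
    then obtain w where w: "z = 2 * w" by blast
    with less.prems have "w \<noteq> 0" "nat \<bar>w\<bar> < nat \<bar>z\<bar>" by auto
    from less.hyps[OF this(2) this(1)] obtain s r where "w = 2^s * r" "odd r" by blast
    thus ?thesis using w by (intro exI[of _ "Suc s"] exI[of _ r]) simp
  qed
qed

lemma key_div:
  fixes a z e Q w :: int
  assumes m: "m = 2^k * w" and oQ: "w dvd Q" and Qodd: "odd Q" and z0: "z \<noteq> 0"
    and zb: "\<bar>z\<bar> < 2^n" and d: "m dvd a * (z + e * (2^n * Q))"
  shows "m dvd a * (2^n * Q)"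
proof -
  obtain s r where zs: "z = 2^s * r" and r: "odd r" using two_split[OF z0] by blast
  have "(2::int)^s \<le> \<bar>z\<bar>"
  proof -
    have "\<bar>r\<bar> \<ge> 1" using r by (cases "r = 0") auto
    hence "(2::int)^s * 1 \<le> 2^s * \<bar>r\<bar>" by (intro mult_left_mono) auto
    thus ?thesis unfolding zs by (simp add: abs_mult)
  qed
  with zb have "(2::int)^s < 2^n" by linarith
  hence sn: "s < n" by (simp add: power_strict_increasing_iff)
  define r' where "r' = r + e * (2^(n-s) * Q)"
  have "odd r'" using r sn unfolding r'_def by simp
  have "(2::int)^n = 2^s * 2^(n-s)" using sn by (simp add: power_add[symmetric])
  hence dd: "z + e * (2^n * Q) = 2^s * r'" unfolding zs r'_def by (simp add: algebra_simps)
  have "2^k dvd m" unfolding m by simp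
  with d have "2^k dvd (a * 2^s) * r'" unfolding dd by (simp add: mult.assoc dvd_trans)
  moreover have "coprime ((2::int)^k) r'" using \<open>odd r'\<close> by simp
  ultimately have "2^k dvd a * 2^s" by (simp add: coprime_dvd_mult_left_iff)
  moreover have "a * 2^s dvd a * (2^n * Q)"
    using sn by (simp add: le_imp_power_dvd mult_dvd_mono)
  ultimately have h1: "2^k dvd a * (2^n * Q)" by (rule dvd_trans)
  have h2: "w dvd a * (2^n * Q)" using oQ by simp
  have "odd w" using oQ Qodd by (auto elim: dvd_trans[rotated])
  hence "coprime ((2::int)^k) w" by simp
  thus ?thesis unfolding m using divides_mult[OF h1 h2] by simp
qed

lemma lower:
  assumes qf: "qfree \<phi>" and wf: "wf \<phi>" and fv: "fv \<phi> \<subseteq> {0}"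
    and ds: "defset \<phi> = {z. z mod 2^(n+1) < 2^n}"
  shows "2^n \<le> length (congs \<phi>)"
proof -
  define cs where "cs = congs \<phi>"
  have "\<forall>j\<in>set cs. \<exists>w. (\<exists>k. snd (snd j) = 2^k * w) \<and> odd w \<and> w > 0"
  proof
    fix j assume "j \<in> set cs"
    obtain t b m where j0: "j = (t,b,m)" by (cases j) auto
    with \<open>j \<in> set cs\<close> have j: "j = (t,b,m)" "(t,b,m) \<in> set (congs \<phi>)" unfolding cs_def by auto
    have m0: "m > 0" using congs_pos[OF wf j(2)] .
    then obtain k w where "m = 2^k * w" "odd w" using two_split[of m] by auto
    moreover have "w > 0" using m0 \<open>m = 2^k * w\<close> by (simp add: zero_less_mult_iff)
    ultimately show "\<exists>w. (\<exists>k. snd (snd j) = 2^k * w) \<and> odd w \<and> w > 0" using j by auto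
  qed
  then obtain W where W0: "\<forall>j\<in>set cs. (\<exists>k. snd (snd j) = 2^k * W j) \<and> odd (W j) \<and> W j > 0"
    using bchoice[OF \<open>\<forall>j\<in>set cs. \<exists>w. _\<close>] by blast
  hence W: "\<And>j. j\<in>set cs \<Longrightarrow> (\<exists>k. snd (snd j) = 2^k * W j) \<and> odd (W j) \<and> W j > 0"
    by blast
  define Q where "Q = (\<Prod>j\<in>set cs. W j)"
  have Qodd: "odd Q" unfolding Q_def using W by (simp add: even_prod_iff)
  have Qpos: "Q > 0" unfolding Q_def using W by (simp add: prod_pos)
  have WQ: "W j dvd Q" if "j \<in> set cs" for j unfolding Q_def using that by (simp add: dvd_prodI)
  define D where "D = (2::int)^n * Q"
  define B where "B = bnd \<phi>"
  have B0: "B \<ge> 0" unfolding B_def by (simp add: bnd_nonneg)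
  define X where "X p = int p + 2^(n+1) * (Q * (B+1))" for p :: nat
  define T where "T j x = (csum (fst j) * x mod snd (snd j) = fst (snd j) mod snd (snd j))"
    for j :: "lin \<times> int \<times> int" and x :: int
  obtain c where c: "Q = 2*c + 1" using Qodd by (metis oddE)
  have XB: "X p > B" "X p + D > B" for p
  proof -
    have "Q * (B+1) \<ge> B + 1" using Qpos B0 by (simp add: mult_le_cancel_right1)
    moreover have "(2::int)^(n+1) * (Q * (B+1)) \<ge> Q * (B+1)"
    proof -
      have h1: "Q * (B+1) \<ge> 0" using Qpos B0 by simp
      have h2: "(2::int)^(n+1) \<ge> 1" using one_le_power[of "2::int" "n+1"] by simp
      from mult_right_mono[OF h2 h1] show ?thesis by simp
    qed
    moreover have "D \<ge> 0" unfolding D_def using Qpos by simp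
    ultimately show "X p > B" "X p + D > B" unfolding X_def by linarith+
  qed
  have intp: "int p < 2^n" if "p < 2^n" for p
  proof -
    have "int p < int (2^n)" using that by linarith
    thus ?thesis by simp
  qed
  have dist: "\<exists>j\<in>set cs. T j (X p) \<noteq> T j (X p + D)" if p: "p < 2^n" for p
  proof (rule ccontr)
    assume "\<not> ?thesis"
    hence "\<forall>(t,b,m) \<in> set (congs \<phi>). (csum t * X p mod m = b mod m) = (csum t * (X p + D) mod m = b mod m)"
      unfolding cs_def T_def by auto
    from sat_same[OF qf fv _ _ this] XB[of p] have eq:
      "sat \<phi> ((\<lambda>_. 0)(0 := X p)) = sat \<phi> ((\<lambda>_. 0)(0 := X p + D))" unfolding B_def by blast
    have "X p mod 2^(n+1) = int p"
    proof -
      have "int p < 2^(n+1)" using intp[OF p] by (simp only: power_Suc power_add power_one_right; linarith)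
      thus ?thesis unfolding X_def by simp
    qed
    moreover have "(X p + D) mod 2^(n+1) = int p + 2^n"
    proof -
      have "X p + D = (int p + 2^n) + 2^(n+1) * (Q * (B+1) + c)"
        unfolding X_def D_def c by (simp add: algebra_simps)
      moreover have "int p + 2^n < 2^(n+1)" using intp[OF p] by (simp only: power_Suc power_add power_one_right; linarith)
      ultimately show ?thesis by simp
    qed
    ultimately have "X p \<in> defset \<phi>" "X p + D \<notin> defset \<phi>" using p unfolding ds by auto
    thus False using eq unfolding defset_def by auto
  qed
  define F where "F p = (SOME j. j \<in> set cs \<and> T j (X p) \<noteq> T j (X p + D))" for p
  have F: "F p \<in> set cs" "T (F p) (X p) \<noteq> T (F p) (X p + D)" if "p < 2^n" for p
    using someI_ex[OF dist[OF that, unfolded Bex_def]] unfolding F_def by auto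
  have Tdvd: "snd (snd j) dvd csum (fst j) * (u - v)" if "T j u" "T j v" for j u v
  proof -
    have "snd (snd j) dvd (csum (fst j) * u - fst (snd j)) - (csum (fst j) * v - fst (snd j))"
      using that unfolding T_def mod_eq_dvd_iff by (rule dvd_diff)
    thus ?thesis by (simp add: right_diff_distrib)
  qed
  have inj: "inj_on F {..<2^n}"
  proof (rule inj_onI, rule ccontr)
    fix p q assume p: "p \<in> {..<(2::nat)^n}" and q: "q \<in> {..<(2::nat)^n}" and Fpq: "F p = F q" and pq: "p \<noteq> q"
    define j where "j = F p"
    have jc: "j \<in> set cs" and Tp: "T j (X p) \<noteq> T j (X p + D)" using F p unfolding j_def by auto
    have Tq: "T j (X q) \<noteq> T j (X q + D)" using F q Fpq unfolding j_def by auto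
    define m where "m = snd (snd j)"
    define a where "a = csum (fst j)"
    obtain k where mk: "m = 2^k * W j" using W[OF jc] unfolding m_def by blast
    have nD: "\<not> m dvd a * D"
    proof
      assume "m dvd a * D"
      hence "a * (X p + D) mod m = a * X p mod m"
        by (metis distrib_left dvd_imp_mod_0 add.right_neutral mod_add_right_eq)
      hence "T j (X p + D) = T j (X p)" unfolding T_def m_def[symmetric] a_def[symmetric] by simp
      thus False using Tp by simp
    qed
    have "\<exists>e::int. T j (X p + e * D)"
    proof (cases "T j (X p)")
      case True thus ?thesis by (intro exI[of _ 0]) simp
    next
      case False thus ?thesis using Tp by (intro exI[of _ 1]) simp
    qed
    then obtain ep :: int where ep: "T j (X p + ep * D)" by blast
    have "\<exists>e::int. T j (X q + e * D)"
    proof (cases "T j (X q)")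
      case True thus ?thesis by (intro exI[of _ 0]) simp
    next
      case False thus ?thesis using Tq by (intro exI[of _ 1]) simp
    qed
    then obtain eq :: int where eq: "T j (X q + eq * D)" by blast
    have "m dvd a * ((X p + ep * D) - (X q + eq * D))" using Tdvd[OF ep eq] unfolding m_def a_def .
    moreover have "(X p + ep * D) - (X q + eq * D) = (int p - int q) + (ep - eq) * (2^n * Q)"
      unfolding X_def D_def by (simp add: algebra_simps)
    ultimately have "m dvd a * ((int p - int q) + (ep - eq) * (2^n * Q))" by simp
    moreover have "\<bar>int p - int q\<bar> < 2^n"
    proof -
      have "p < 2^n" "q < 2^n" using p q by auto
      hence "int p < 2^n" "int q < 2^n" using intp by blast+
      thus ?thesis by linarith
    qed
    ultimately have "m dvd a * (2^n * Q)"
      using key_div[OF mk WQ[OF jc] Qodd, of "int p - int q" n a "ep - eq"] pq by simp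
    thus False using nD unfolding D_def by simp
  qed
  have "card {..<(2::nat)^n} \<le> card (set cs)"
    using card_inj_on_le[OF inj] F by auto
  also have "\<dots> \<le> length cs" by (rule card_length)
  finally show ?thesis unfolding cs_def by simp
qed

theorem mainTheorem15:
  shows "\<exists>(c::real) (\<Phi>::nat \<Rightarrow> pform).
     c > 0 \<and>
     (\<forall>n. existential (\<Phi> n) \<and> wf (\<Phi> n) \<and> fv (\<Phi> n) \<subseteq> {0}) \<and>
     (\<lambda>n. real (psize (\<Phi> n))) \<in> O(\<lambda>n. real n ^ 2) \<and>
     (\<exists>N. \<forall>n\<ge>N. \<forall>\<phi>. qfree \<phi> \<and> wf \<phi> \<and> fv \<phi> \<subseteq> {0} \<and> defset \<phi> = defset (\<Phi> n)
              \<longrightarrow> real (psize \<phi>) \<ge> 2 powr (c * real n))"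
proof (intro exI[of _ 1] exI[of _ Phi] conjI allI impI Phi_props Phi_bigo exI[of _ 0])
  fix n \<phi> assume h: "qfree \<phi> \<and> wf \<phi> \<and> fv \<phi> \<subseteq> {0} \<and> defset \<phi> = defset (Phi n)"
  hence "2^n \<le> length (congs \<phi>)" using lower[of \<phi> n] defset_Phi[of n] by auto
  also have "\<dots> \<le> psize \<phi>" by (rule length_congs)
  finally have "real (2^n) \<le> real (psize \<phi>)" by linarith
  thus "2 powr (1 * real n) \<le> real (psize \<phi>)" by (simp add: powr_realpow)
qed (use Phi_props in auto)

end
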